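(* For every infinite set $X$ there exists a generic metric space of cardinality $\#X$. Specifically: fix a well-order $\le$ on $X$; let $G_o$ be the oriented graph on $X$ with an edge $(x,y)$ whenever $x<y$; let $H_o$ be obtained by replacing each oriented edge $e=(x,y)$ of $G_o$ with three new vertices $u_e,v_e,w_e$ and the four oriented edges $(x,u_e),(u_e,v_e),(v_e,y),(v_e,w_e)$; let $H=(V_H,E_H)$ be the underlying non-oriented graph. Then $H$ has trivial automorphism group, $\#V_H=\#X$, and for any $\varepsilon\in(0,1)$ the metric on $V_H$ with distance $1$ between distinct adjacent vertices and $1+\varepsilon$ between distinct non-adjacent vertices is a generic metric space with $s(V_H)=1$, $t(V_H)=1-\varepsilon$ and $e(V_H)=\varepsilon$.
   Context: For a metric space $M$ with $\#M\ge3$: $s(M)=\inf\{|xx'|: x\ne x'\}$; $t(M)=\inf\{|xx'|+|x'x''|-|xx''|: x,x',x''\text{ pairwise distinct}\}$; $e(M)=\inf\{\operatorname{dis}f: f\colon M\to M \text{ bijective}, f\ne\mathrm{id}\}$, where $\operatorname{dis}f=\sup_{x,x'}||xx'|-|f(x)f(x')||$. $M$ is called generic if $\#M\ge3$ and $s(M),t(M),e(M)$ are all positive. *)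

theory Defs
  imports Main "HOL-Library.Extended_Real" "HOL-Library.Equipollence"
begin

definition metric_on :: "'a set \<Rightarrow> ('a \<Rightarrow> 'a \<Rightarrow> real) \<Rightarrow> bool" where
  "metric_on M d \<longleftrightarrow>
     (\<forall>x\<in>M. \<forall>y\<in>M. d x y \<ge> 0 \<and> (d x y = 0 \<longleftrightarrow> x = y) \<and> d x y = d y x) \<and>
     (\<forall>x\<in>M. \<forall>y\<in>M. \<forall>z\<in>M. d x z \<le> d x y + d y z)"

definition s_inv :: "'a set \<Rightarrow> ('a \<Rightarrow> 'a \<Rightarrow> real) \<Rightarrow> real" where
  "s_inv M d = Inf {d x x' | x x'. x \<in> M \<and> x' \<in> M \<and> x \<noteq> x'}"

definition t_inv :: "'a set \<Rightarrow> ('a \<Rightarrow> 'a \<Rightarrow> real) \<Rightarrow> real" where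
  "t_inv M d = Inf {d x x' + d x' x'' - d x x'' | x x' x''.
       x \<in> M \<and> x' \<in> M \<and> x'' \<in> M \<and> x \<noteq> x' \<and> x' \<noteq> x'' \<and> x \<noteq> x''}"

text \<open>Distortion of a map (possibly infinite, hence extended real).\<close>
definition dis :: "'a set \<Rightarrow> ('a \<Rightarrow> 'a \<Rightarrow> real) \<Rightarrow> ('a \<Rightarrow> 'a) \<Rightarrow> ereal" where
  "dis M d f = (SUP p \<in> M \<times> M. ereal \<bar>d (fst p) (snd p) - d (f (fst p)) (f (snd p))\<bar>)"

definition e_inv :: "'a set \<Rightarrow> ('a \<Rightarrow> 'a \<Rightarrow> real) \<Rightarrow> ereal" where
  "e_inv M d = (INF f \<in> {f. bij_betw f M M \<and> (\<exists>x\<in>M. f x \<noteq> x)}. dis M d f)"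

definition generic :: "'a set \<Rightarrow> ('a \<Rightarrow> 'a \<Rightarrow> real) \<Rightarrow> bool" where
  "generic M d \<longleftrightarrow> metric_on M d \<and> (infinite M \<or> card M \<ge> 3) \<and>
     s_inv M d > 0 \<and> t_inv M d > 0 \<and> e_inv M d > 0"

text \<open>Vertices of H: original points, and for each oriented edge (x,y) three new vertices.\<close>
datatype 'a hvert = Orig 'a | UV 'a 'a | VV 'a 'a | WV 'a 'a

definition sless :: "'a rel \<Rightarrow> 'a \<Rightarrow> 'a \<Rightarrow> bool" where
  "sless r x y \<longleftrightarrow> (x, y) \<in> r \<and> x \<noteq> y"

definition Go_edges :: "'a set \<Rightarrow> 'a rel \<Rightarrow> ('a \<times> 'a) set" where
  "Go_edges X r = {(x, y). x \<in> X \<and> y \<in> X \<and> sless r x y}"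

definition VH :: "'a set \<Rightarrow> 'a rel \<Rightarrow> 'a hvert set" where
  "VH X r = Orig ` X \<union> (\<Union>(x, y) \<in> Go_edges X r. {UV x y, VV x y, WV x y})"

definition Ho_edges :: "'a set \<Rightarrow> 'a rel \<Rightarrow> ('a hvert \<times> 'a hvert) set" where
  "Ho_edges X r = (\<Union>(x, y) \<in> Go_edges X r.
      {(Orig x, UV x y), (UV x y, VV x y), (VV x y, Orig y), (VV x y, WV x y)})"

definition adjH :: "'a set \<Rightarrow> 'a rel \<Rightarrow> 'a hvert \<Rightarrow> 'a hvert \<Rightarrow> bool" where
  "adjH X r a b \<longleftrightarrow> (a, b) \<in> Ho_edges X r \<or> (b, a) \<in> Ho_edges X r"

definition graph_aut :: "'v set \<Rightarrow> ('v \<Rightarrow> 'v \<Rightarrow> bool) \<Rightarrow> ('v \<Rightarrow> 'v) \<Rightarrow> bool" where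
  "graph_aut V adj f \<longleftrightarrow> bij_betw f V V \<and>
     (\<forall>a\<in>V. \<forall>b\<in>V. adj (f a) (f b) \<longleftrightarrow> adj a b)"

definition dH :: "'a set \<Rightarrow> 'a rel \<Rightarrow> real \<Rightarrow> 'a hvert \<Rightarrow> 'a hvert \<Rightarrow> real" where
  "dH X r \<epsilon> a b = (if a = b then 0 else if adjH X r a b then 1 else 1 + \<epsilon>)"

end

theory Submission imports Defs begin

lemma GoE: "(x,y) \<in> Go_edges X r \<longleftrightarrow> x \<in> X \<and> y \<in> X \<and> sless r x y"
  by (simp add: Go_edges_def)

lemma sless_irr: "\<not> sless r x x" by (simp add: sless_def)

lemma VH_simps:
  "Orig x \<in> VH X r \<longleftrightarrow> x \<in> X"
  "UV x y \<in> VH X r \<longleftrightarrow> (x,y) \<in> Go_edges X r"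
  "VV x y \<in> VH X r \<longleftrightarrow> (x,y) \<in> Go_edges X r"
  "WV x y \<in> VH X r \<longleftrightarrow> (x,y) \<in> Go_edges X r"
  by (auto simp: VH_def)

lemma adj_simps:
  "adjH X r (Orig a) (Orig b) = False"
  "adjH X r (Orig a) (UV c d) = ((c,d) \<in> Go_edges X r \<and> a = c)"
  "adjH X r (Orig a) (VV c d) = ((c,d) \<in> Go_edges X r \<and> a = d)"
  "adjH X r (Orig a) (WV c d) = False"
  "adjH X r (UV a b) (Orig c) = ((a,b) \<in> Go_edges X r \<and> c = a)"
  "adjH X r (UV a b) (UV c d) = False"
  "adjH X r (UV a b) (VV c d) = ((a,b) \<in> Go_edges X r \<and> c = a \<and> d = b)"
  "adjH X r (UV a b) (WV c d) = False"
  "adjH X r (VV a b) (Orig c) = ((a,b) \<in> Go_edges X r \<and> c = b)"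
  "adjH X r (VV a b) (UV c d) = ((a,b) \<in> Go_edges X r \<and> c = a \<and> d = b)"
  "adjH X r (VV a b) (VV c d) = False"
  "adjH X r (VV a b) (WV c d) = ((a,b) \<in> Go_edges X r \<and> c = a \<and> d = b)"
  "adjH X r (WV a b) (Orig c) = False"
  "adjH X r (WV a b) (UV c d) = False"
  "adjH X r (WV a b) (VV c d) = ((c,d) \<in> Go_edges X r \<and> a = c \<and> b = d)"
  "adjH X r (WV a b) (WV c d) = False"
  by (auto simp: adjH_def Ho_edges_def)

lemma adj_sym: "adjH X r a b = adjH X r b a" by (auto simp: adjH_def)

lemma adj_irr: "\<not> adjH X r a a"
  by (cases a) (auto simp: adj_simps GoE sless_irr)

lemma adj_V: "adjH X r a b \<Longrightarrow> a \<in> VH X r \<and> b \<in> VH X r"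
  by (cases a; cases b) (auto simp: adj_simps VH_simps GoE)

definition NH where "NH X r a = {b. adjH X r a b}"

definition kind where "kind X r a = (if finite (NH X r a) then card (NH X r a) else 0)"

lemma NH_UV: "(x,y) \<in> Go_edges X r \<Longrightarrow> NH X r (UV x y) = {Orig x, VV x y}"
  unfolding NH_def by (rule set_eqI) (case_tac xa; auto simp: adj_simps)
lemma NH_VV: "(x,y) \<in> Go_edges X r \<Longrightarrow> NH X r (VV x y) = {UV x y, Orig y, WV x y}"
  unfolding NH_def by (rule set_eqI) (case_tac xa; auto simp: adj_simps)
lemma NH_WV: "(x,y) \<in> Go_edges X r \<Longrightarrow> NH X r (WV x y) = {VV x y}"
  unfolding NH_def by (rule set_eqI) (case_tac xa; auto simp: adj_simps)

lemma NH_Orig_inf: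
  assumes "infinite X" "well_order_on X r" "x \<in> X"
  shows "infinite (NH X r (Orig x))"
proof
  assume fin: "finite (NH X r (Orig x))"
  have tot: "total_on X r" using assms(2)
    by (simp add: well_order_on_def linear_order_on_def)
  define \<phi> where "\<phi> y = (if sless r x y then UV x y else VV y x)" for y
  have inj: "inj_on \<phi> (X - {x})" by (rule inj_onI) (auto simp: \<phi>_def split: if_splits)
  have "\<phi> ` (X - {x}) \<subseteq> NH X r (Orig x)"
  proof
    fix b assume "b \<in> \<phi> ` (X - {x})"
    then obtain y where y: "y \<in> X" "y \<noteq> x" "b = \<phi> y" by auto
    show "b \<in> NH X r (Orig x)"
    proof (cases "sless r x y")
      case True thus ?thesis using y assms(3) by (simp add: \<phi>_def NH_def adj_simps GoE)
    next
      case False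
      hence "sless r y x" using tot y assms(3) by (auto simp: total_on_def sless_def)
      thus ?thesis using False y assms(3) by (simp add: \<phi>_def NH_def adj_simps GoE)
    qed
  qed
  hence "finite (\<phi> ` (X - {x}))" using fin finite_subset by blast
  hence "finite (X - {x})" using inj finite_image_iff by blast
  thus False using assms(1) by simp
qed

lemma kind_vals:
  assumes "infinite X" "well_order_on X r" "a \<in> VH X r"
  shows "kind X r a = (case a of Orig _ \<Rightarrow> 0 | UV _ _ \<Rightarrow> 2 | VV _ _ \<Rightarrow> 3 | WV _ _ \<Rightarrow> 1)"
  using assms
  by (cases a) (auto simp: kind_def VH_simps NH_UV NH_VV NH_WV NH_Orig_inf)

lemma aut_NH:
  assumes "graph_aut (VH X r) (adjH X r) f" "a \<in> VH X r"
  shows "NH X r (f a) = f ` NH X r a"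
proof -
  have b: "bij_betw f (VH X r) (VH X r)" using assms(1) unfolding graph_aut_def by blast
  have p: "\<And>u v. u \<in> VH X r \<Longrightarrow> v \<in> VH X r \<Longrightarrow> adjH X r (f u) (f v) = adjH X r u v"
    using assms(1) unfolding graph_aut_def by blast
  have img: "f ` VH X r = VH X r" using b unfolding bij_betw_def by blast
  show ?thesis
  proof (rule set_eqI, rule iffI)
    fix c assume "c \<in> NH X r (f a)"
    hence c1: "adjH X r (f a) c" unfolding NH_def by blast
    hence "c \<in> VH X r" using adj_V by blast
    hence "c \<in> f ` VH X r" using img by blast
    then obtain c' where c': "c' \<in> VH X r" "c = f c'" by blast
    have "adjH X r a c'" using c1 p[OF assms(2) c'(1)] c'(2) by simp
    thus "c \<in> f ` NH X r a" using c'(2) unfolding NH_def by blast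
  next
    fix c assume "c \<in> f ` NH X r a"
    then obtain c' where c': "adjH X r a c'" "c = f c'" unfolding NH_def by blast
    have "c' \<in> VH X r" using adj_V[OF c'(1)] by blast
    hence "adjH X r (f a) (f c')" using p[OF assms(2)] c'(1) by simp
    thus "c \<in> NH X r (f a)" using c'(2) unfolding NH_def by blast
  qed
qed

lemma aut_kind:
  assumes "graph_aut (VH X r) (adjH X r) f" "a \<in> VH X r"
  shows "kind X r (f a) = kind X r a"
proof -
  have "inj_on f (VH X r)" using assms(1) unfolding graph_aut_def bij_betw_def by blast
  moreover have "NH X r a \<subseteq> VH X r" using adj_V unfolding NH_def by blast
  ultimately have i: "inj_on f (NH X r a)" using inj_on_subset by blast
  show ?thesis using aut_NH[OF assms] i
    by (simp add: kind_def finite_image_iff card_image)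
qed


lemma wo_mono_id:
  assumes wo: "well_order_on X r" and bij: "bij_betw g X X"
    and mono: "\<And>x y. x \<in> X \<Longrightarrow> y \<in> X \<Longrightarrow> sless r x y \<Longrightarrow> sless r (g x) (g y)"
  shows "\<forall>x\<in>X. g x = x"
proof -
  have wf: "wf (r - Id)" and tot: "total_on X r" and anti: "antisym r"
    using wo by (auto simp: well_order_on_def linear_order_on_def partial_order_on_def)
  have inj: "inj_on g X" and img: "g ` X = X" using bij by (auto simp: bij_betw_def)
  have "x \<in> X \<longrightarrow> g x = x" for x
  proof (induction x rule: wf_induct[OF wf])
    case (1 x)
    show ?case
    proof
      assume xX: "x \<in> X"
      have gx: "g x \<in> X" using img xX by blast
      show "g x = x"
      proof (rule ccontr)
        assume ne: "g x \<noteq> x"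
        from tot xX gx ne have "(g x, x) \<in> r \<or> (x, g x) \<in> r" by (auto simp: total_on_def)
        thus False
        proof
          assume "(g x, x) \<in> r"
          hence "(g x, x) \<in> r - Id" using ne by simp
          hence "g (g x) = g x" using 1 gx by blast
          hence "g x = x" using inj gx xX by (auto dest: inj_onD)
          thus False using ne by simp
        next
          assume a: "(x, g x) \<in> r"
          obtain z where z: "z \<in> X" "x = g z" using img xX by blast
          have zx: "z \<noteq> x" using z ne by auto
          from tot z xX zx have "(z, x) \<in> r \<or> (x, z) \<in> r" by (auto simp: total_on_def)
          thus False
          proof
            assume "(z, x) \<in> r"
            hence "g z = z" using 1 z zx by blast
            thus False using z zx by simp
          next
            assume "(x, z) \<in> r"
            hence "sless r (g x) (g z)" using mono xX z zx by (simp add: sless_def)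
            hence "(g x, x) \<in> r" using z by (simp add: sless_def)
            thus False using a anti ne by (auto simp: antisym_def)
          qed
        qed
      qed
    qed
  qed
  thus ?thesis by blast
qed

lemma Go_ex:
  assumes "infinite X" "well_order_on X r"
  shows "\<exists>x y. (x,y) \<in> Go_edges X r"
proof -
  obtain x where x: "x \<in> X" using assms(1) by (metis finite.emptyI ex_in_conv)
  have "infinite (X - {x})" using assms(1) by simp
  then obtain y where y: "y \<in> X" "y \<noteq> x" by (metis Diff_iff ex_in_conv finite.emptyI singletonI)
  have tot: "total_on X r" using assms(2) by (simp add: well_order_on_def linear_order_on_def)
  from tot x y have "(x, y) \<in> r \<or> (y, x) \<in> r" by (auto simp: total_on_def)
  thus ?thesis using x y by (auto simp: GoE sless_def)
qed

lemma aut_trivial: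
  assumes inf: "infinite X" and wo: "well_order_on X r"
    and aut: "graph_aut (VH X r) (adjH X r) f"
  shows "\<forall>v\<in>VH X r. f v = v"
proof -
  let ?V = "VH X r" and ?E = "Go_edges X r"
  have b: "bij_betw f ?V ?V" using aut unfolding graph_aut_def by blast
  have p: "\<And>a b. a\<in>?V \<Longrightarrow> b\<in>?V \<Longrightarrow> adjH X r (f a) (f b) = adjH X r a b"
    using aut unfolding graph_aut_def by blast
  have inj: "inj_on f ?V" using b unfolding bij_betw_def by blast
  have img: "f ` ?V = ?V" using b unfolding bij_betw_def by blast
  have fV: "a \<in> ?V \<Longrightarrow> f a \<in> ?V" for a using img by blast
  have kk: "a \<in> ?V \<Longrightarrow> kind X r (f a) = kind X r a" for a using aut_kind[OF aut] by blast
  have kv: "a \<in> ?V \<Longrightarrow> kind X r a = (case a of Orig _ \<Rightarrow> 0 | UV _ _ \<Rightarrow> 2 | VV _ _ \<Rightarrow> 3 | WV _ _ \<Rightarrow> 1)" for a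
    using kind_vals[OF inf wo] by blast
  have fO: "\<exists>z. f (Orig x) = Orig z \<and> z \<in> X" if "x \<in> X" for x
  proof -
    have o: "Orig x \<in> ?V" using that by (simp add: VH_simps)
    have "kind X r (f (Orig x)) = 0" using kk[OF o] kv[OF o] by simp
    thus ?thesis using kv[OF fV[OF o]] fV[OF o] by (cases "f (Orig x)") (auto simp: VH_simps)
  qed
  have fU: "\<exists>a b. f (UV x y) = UV a b \<and> (a,b) \<in> ?E" if "(x,y) \<in> ?E" for x y
  proof -
    have o: "UV x y \<in> ?V" using that by (simp add: VH_simps)
    have "kind X r (f (UV x y)) = 2" using kk[OF o] kv[OF o] by simp
    thus ?thesis using kv[OF fV[OF o]] fV[OF o] by (cases "f (UV x y)") (auto simp: VH_simps)
  qed
  have fVV: "\<exists>a b. f (VV x y) = VV a b \<and> (a,b) \<in> ?E" if "(x,y) \<in> ?E" for x y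
  proof -
    have o: "VV x y \<in> ?V" using that by (simp add: VH_simps)
    have "kind X r (f (VV x y)) = 3" using kk[OF o] kv[OF o] by simp
    thus ?thesis using kv[OF fV[OF o]] fV[OF o] by (cases "f (VV x y)") (auto simp: VH_simps)
  qed
  have fW: "\<exists>a b. f (WV x y) = WV a b \<and> (a,b) \<in> ?E" if "(x,y) \<in> ?E" for x y
  proof -
    have o: "WV x y \<in> ?V" using that by (simp add: VH_simps)
    have "kind X r (f (WV x y)) = 1" using kk[OF o] kv[OF o] by simp
    thus ?thesis using kv[OF fV[OF o]] fV[OF o] by (cases "f (WV x y)") (auto simp: VH_simps)
  qed
  define g where "g x = (THE z. f (Orig x) = Orig z)" for x
  have g: "f (Orig x) = Orig (g x) \<and> g x \<in> X" if "x \<in> X" for x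
    using fO[OF that] by (auto simp: g_def)
  have gUV: "f (UV x y) = UV (g x) (g y) \<and> f (VV x y) = VV (g x) (g y) \<and> (g x, g y) \<in> ?E"
    if e: "(x,y) \<in> ?E" for x y
  proof -
    have xy: "x \<in> X" "y \<in> X" using e by (auto simp: GoE)
    obtain a b where ab: "f (UV x y) = UV a b" "(a,b) \<in> ?E" using fU[OF e] by blast
    obtain c d where cd: "f (VV x y) = VV c d" "(c,d) \<in> ?E" using fVV[OF e] by blast
    have oV: "Orig x \<in> ?V" "Orig y \<in> ?V" "UV x y \<in> ?V" "VV x y \<in> ?V" using xy e by (auto simp: VH_simps)
    have "adjH X r (f (Orig x)) (f (UV x y))" using p[OF oV(1) oV(3)] e by (simp add: adj_simps)
    hence 1: "g x = a" using g[OF xy(1)] ab by (simp add: adj_simps)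
    have "adjH X r (f (UV x y)) (f (VV x y))" using p[OF oV(3) oV(4)] e by (simp add: adj_simps)
    hence 2: "c = a \<and> d = b" using ab cd by (simp add: adj_simps)
    have "adjH X r (f (VV x y)) (f (Orig y))" using p[OF oV(4) oV(2)] e by (simp add: adj_simps)
    hence 3: "g y = d" using g[OF xy(2)] cd by (simp add: adj_simps)
    show ?thesis using 1 2 3 ab cd by simp
  qed
  have gbij: "bij_betw g X X"
  proof -
    have "inj_on g X"
    proof (rule inj_onI)
      fix x y assume "x \<in> X" "y \<in> X" "g x = g y"
      hence "f (Orig x) = f (Orig y)" using g[OF \<open>x \<in> X\<close>] g[OF \<open>y \<in> X\<close>] by simp
      hence "Orig x = Orig y" using inj \<open>x \<in> X\<close> \<open>y \<in> X\<close> by (auto simp: VH_simps dest: inj_onD)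
      thus "x = y" by simp
    qed
    moreover have "g ` X = X"
    proof
      show "g ` X \<subseteq> X" using g by blast
      show "X \<subseteq> g ` X"
      proof
        fix z assume z: "z \<in> X"
        hence "Orig z \<in> f ` ?V" using img by (simp add: VH_simps)
        then obtain v where v: "v \<in> ?V" "Orig z = f v" by blast
        show "z \<in> g ` X"
        proof (cases v)
          case (Orig x) thus ?thesis using v g by (auto simp: VH_simps)
        next
          case (UV x y) thus ?thesis using v fU[of x y] by (auto simp: VH_simps)
        next
          case (VV x y) thus ?thesis using v fVV[of x y] by (auto simp: VH_simps)
        next
          case (WV x y) thus ?thesis using v fW[of x y] by (auto simp: VH_simps)
        qed
      qed
    qed
    ultimately show ?thesis by (simp add: bij_betw_def)
  qed
  have mono: "sless r (g x) (g y)" if "x\<in>X" "y\<in>X" "sless r x y" for x y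
    using gUV[of x y] that by (simp add: GoE)
  have gid: "\<forall>x\<in>X. g x = x" using wo_mono_id[OF wo gbij mono] by blast
  show ?thesis
  proof
    fix v assume v: "v \<in> ?V"
    show "f v = v"
    proof (cases v)
      case (Orig x) thus ?thesis using v g gid by (auto simp: VH_simps)
    next
      case (UV x y) thus ?thesis using v gUV gid by (auto simp: VH_simps GoE)
    next
      case (VV x y) thus ?thesis using v gUV gid by (auto simp: VH_simps GoE)
    next
      case (WV x y)
      have e: "(x,y) \<in> ?E" using v WV by (simp add: VH_simps)
      obtain a b where ab: "f (WV x y) = WV a b" "(a,b) \<in> ?E" using fW[OF e] by blast
      have oV: "VV x y \<in> ?V" "WV x y \<in> ?V" using e by (auto simp: VH_simps)
      have "adjH X r (f (VV x y)) (f (WV x y))" using p[OF oV] e by (simp add: adj_simps)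
      moreover have "f (VV x y) = VV x y" using gUV[OF e] gid e by (auto simp: GoE)
      ultimately show ?thesis using ab WV by (simp add: adj_simps)
    qed
  qed
qed


lemma pick: "infinite X \<Longrightarrow> finite F \<Longrightarrow> \<exists>a. a \<in> X \<and> a \<notin> F"
  using infinite_imp_nonempty[of "X - F"] by auto

lemma VH_eqpoll:
  fixes X :: "'a set" and r :: "'a rel"
  assumes inf: "infinite X"
  shows "VH X r \<approx> X"
proof (rule lepoll_antisym)
  show "X \<lesssim> VH X r"
    unfolding lepoll_def' by (rule exI[of _ Orig]) (auto simp: VH_simps inj_on_def)
  obtain a0 where a0: "a0 \<in> X" using pick[OF inf, of "{}"] by auto
  obtain a1 where a1: "a1 \<in> X" "a1 \<notin> {a0}" using pick[OF inf, of "{a0}"] by auto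
  obtain a2 where a2: "a2 \<in> X" "a2 \<notin> {a0,a1}" using pick[OF inf, of "{a0,a1}"] by auto
  obtain a3 where a3: "a3 \<in> X" "a3 \<notin> {a0,a1,a2}" using pick[OF inf, of "{a0,a1,a2}"] by auto
  define h :: "'a \<times> 'a \<times> 'a \<Rightarrow> 'a hvert" where "h = (\<lambda>(k,x,y). if k = a0 then Orig x else if k = a1 then UV x y
      else if k = a2 then VV x y else WV x y)"
  have "VH X r \<subseteq> h ` (X \<times> X \<times> X)"
  proof
    fix v assume v: "v \<in> VH X r"
    show "v \<in> h ` (X \<times> X \<times> X)"
    proof (cases v)
      case (Orig x)
      hence "v = h (a0, x, x)" "(a0,x,x) \<in> X \<times> X \<times> X" using v a0 by (auto simp: h_def VH_simps)
      thus ?thesis by blast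
    next
      case (UV x y)
      hence "v = h (a1, x, y)" "(a1,x,y) \<in> X \<times> X \<times> X" using v a1 by (auto simp: h_def VH_simps GoE)
      thus ?thesis by blast
    next
      case (VV x y)
      hence "v = h (a2, x, y)" "(a2,x,y) \<in> X \<times> X \<times> X" using v a2 by (auto simp: h_def VH_simps GoE)
      thus ?thesis by blast
    next
      case (WV x y)
      hence "v = h (a3, x, y)" "(a3,x,y) \<in> X \<times> X \<times> X" using v a3 by (auto simp: h_def VH_simps GoE)
      thus ?thesis by blast
    qed
  qed
  hence 1: "VH X r \<lesssim> X \<times> X \<times> X" by (rule subset_image_lepoll)
  have 2: "X \<times> X \<approx> X" using card_of_Times_same_infinite[OF inf] eqpoll_iff_card_of_ordIso by blast
  have "X \<times> X \<times> X \<approx> X \<times> X" by (rule times_eqpoll_cong[OF eqpoll_refl 2])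
  hence "X \<times> X \<times> X \<approx> X" using 2 eqpoll_trans by blast
  thus "VH X r \<lesssim> X" using 1 lepoll_trans2 by blast
qed

lemma dH_vals:
  "a \<noteq> b \<Longrightarrow> dH X r \<epsilon> a b = 1 \<or> dH X r \<epsilon> a b = 1 + \<epsilon>"
  by (simp add: dH_def)

lemma metric_part:
  assumes inf: "infinite X" and wo: "well_order_on X r" and e0: "0 < \<epsilon>" and e1: "\<epsilon> < 1"
  shows "generic (VH X r) (dH X r \<epsilon>)
          \<and> s_inv (VH X r) (dH X r \<epsilon>) = 1
          \<and> t_inv (VH X r) (dH X r \<epsilon>) = 1 - \<epsilon>
          \<and> e_inv (VH X r) (dH X r \<epsilon>) = ereal \<epsilon>"
proof -
  let ?V = "VH X r" and ?d = "dH X r \<epsilon>"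
  obtain x y where e: "(x,y) \<in> Go_edges X r" using Go_ex[OF inf wo] by blast
  have xy: "x \<noteq> y" using e by (auto simp: GoE sless_def)
  have vs: "Orig x \<in> ?V" "UV x y \<in> ?V" "VV x y \<in> ?V" using e by (auto simp: VH_simps GoE)
  have met: "metric_on ?V ?d"
    unfolding metric_on_def
  proof (intro conjI ballI)
    fix a b assume "a \<in> ?V" "b \<in> ?V"
    show "?d a b \<ge> 0" using e0 by (simp add: dH_def)
    show "(?d a b = 0) = (a = b)" using e0 by (simp add: dH_def)
    show "?d a b = ?d b a" by (simp add: dH_def adj_sym eq_commute)
  next
    fix a b c assume "a \<in> ?V" "b \<in> ?V" "c \<in> ?V"
    show "?d a c \<le> ?d a b + ?d b c"
      using e0 e1 by (simp add: dH_def)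
  qed
  have infV: "infinite ?V"
  proof
    assume "finite ?V"
    hence "finite (Orig ` X)" by (rule finite_subset[rotated]) (auto simp: VH_simps)
    hence "finite X" by (simp add: finite_image_iff inj_on_def)
    thus False using inf by simp
  qed
  have s: "s_inv ?V ?d = 1"
    unfolding s_inv_def
  proof (rule cInf_eq_minimum)
    have "?d (Orig x) (UV x y) = 1" using e by (simp add: dH_def adj_simps)
    thus "1 \<in> {?d a b | a b. a \<in> ?V \<and> b \<in> ?V \<and> a \<noteq> b}"
      using vs by force
    fix z assume "z \<in> {?d a b | a b. a \<in> ?V \<and> b \<in> ?V \<and> a \<noteq> b}"
    thus "1 \<le> z" using e0 by (auto simp: dH_def)
  qed
  have t: "t_inv ?V ?d = 1 - \<epsilon>"
    unfolding t_inv_def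
  proof (rule cInf_eq_minimum)
    have h1: "?d (Orig x) (UV x y) + ?d (UV x y) (VV x y) - ?d (Orig x) (VV x y) = 1 - \<epsilon>"
      using e xy by (simp add: dH_def adj_simps)
    show "1 - \<epsilon> \<in> {?d a b + ?d b c - ?d a c | a b c. a \<in> ?V \<and> b \<in> ?V \<and> c \<in> ?V \<and> a \<noteq> b \<and> b \<noteq> c \<and> a \<noteq> c}"
      apply (rule CollectI, rule exI[of _ "Orig x"], rule exI[of _ "UV x y"], rule exI[of _ "VV x y"])
      using vs xy h1 by simp
    fix z assume "z \<in> {?d a b + ?d b c - ?d a c | a b c. a \<in> ?V \<and> b \<in> ?V \<and> c \<in> ?V \<and> a \<noteq> b \<and> b \<noteq> c \<and> a \<noteq> c}"
    thus "1 - \<epsilon> \<le> z" using e0 by (auto simp: dH_def)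
  qed
  have disle: "dis ?V ?d f \<le> ereal \<epsilon>" if "bij_betw f ?V ?V" for f
    unfolding dis_def
  proof (rule SUP_least)
    fix p assume p: "p \<in> ?V \<times> ?V"
    have "inj_on f ?V" using that by (simp add: bij_betw_def)
    hence "fst p \<noteq> snd p \<Longrightarrow> f (fst p) \<noteq> f (snd p)" using p by (auto dest: inj_onD)
    hence "\<bar>?d (fst p) (snd p) - ?d (f (fst p)) (f (snd p))\<bar> \<le> \<epsilon>"
      using e0 by (auto simp: dH_def)
    thus "ereal \<bar>?d (fst p) (snd p) - ?d (f (fst p)) (f (snd p))\<bar> \<le> ereal \<epsilon>" by simp
  qed
  have disge: "ereal \<epsilon> \<le> dis ?V ?d f" if f: "bij_betw f ?V ?V" "\<exists>v\<in>?V. f v \<noteq> v" for f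
  proof -
    have "\<not> graph_aut ?V (adjH X r) f" using aut_trivial[OF inf wo] f(2) by blast
    hence "\<not> (\<forall>a\<in>?V. \<forall>b\<in>?V. adjH X r (f a) (f b) = adjH X r a b)"
      using f(1) unfolding graph_aut_def by blast
    then obtain a b where ab: "a \<in> ?V" "b \<in> ?V" "adjH X r (f a) (f b) \<noteq> adjH X r a b"
      by blast
    have "a \<noteq> b" using ab adj_irr by metis
    moreover have "inj_on f ?V" using f(1) by (simp add: bij_betw_def)
    ultimately have "f a \<noteq> f b" using ab by (auto dest: inj_onD)
    hence "\<bar>?d a b - ?d (f a) (f b)\<bar> = \<epsilon>" using \<open>a \<noteq> b\<close> ab(3) e0 by (auto simp: dH_def)
    moreover have "ereal \<bar>?d (fst (a,b)) (snd (a,b)) - ?d (f (fst (a,b))) (f (snd (a,b)))\<bar> \<le> dis ?V ?d f"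
      unfolding dis_def by (rule SUP_upper) (use ab in auto)
    ultimately show ?thesis by simp
  qed
  define f0 where "f0 v = (if v = Orig x then UV x y else if v = UV x y then Orig x else v)" for v
  have f0b: "bij_betw f0 ?V ?V"
    by (rule bij_betw_byWitness[where f' = f0]) (use vs in \<open>auto simp: f0_def\<close>)
  have f0n: "\<exists>v\<in>?V. f0 v \<noteq> v" using vs by (auto simp: f0_def intro!: bexI[of _ "Orig x"])
  have eI: "e_inv ?V ?d = ereal \<epsilon>"
    unfolding e_inv_def
  proof (rule antisym)
    show "(INF f \<in> {f. bij_betw f ?V ?V \<and> (\<exists>x\<in>?V. f x \<noteq> x)}. dis ?V ?d f) \<le> ereal \<epsilon>"
      by (rule INF_lower2[of f0]) (use f0b f0n disle in auto)
    show "ereal \<epsilon> \<le> (INF f \<in> {f. bij_betw f ?V ?V \<and> (\<exists>x\<in>?V. f x \<noteq> x)}. dis ?V ?d f)"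
      by (rule INF_greatest) (use disge in auto)
  qed
  show ?thesis using met infV s t eI e0 e1 by (simp add: generic_def)
qed

theorem mainTheorem19:
  fixes X :: "'a set" and r :: "'a rel"
  assumes "infinite X" and "well_order_on X r"
  shows "(\<forall>f. graph_aut (VH X r) (adjH X r) f \<longrightarrow> (\<forall>v\<in>VH X r. f v = v))
     \<and> VH X r \<approx> X
     \<and> (\<forall>\<epsilon>::real. 0 < \<epsilon> \<and> \<epsilon> < 1 \<longrightarrow>
          generic (VH X r) (dH X r \<epsilon>)
          \<and> s_inv (VH X r) (dH X r \<epsilon>) = 1
          \<and> t_inv (VH X r) (dH X r \<epsilon>) = 1 - \<epsilon>
          \<and> e_inv (VH X r) (dH X r \<epsilon>) = ereal \<epsilon>)"
  using aut_trivial[OF assms] VH_eqpoll[OF assms(1)] metric_part[OF assms] by blast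

end
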